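(* Let $\{\xi_j : j\in\mathbb{Z}\}$ be independent and identically distributed real random variables. Suppose $\xi_0$ has zero mean and finite positive variance, and that the moment generating function $t\mapsto \mathbb{E}[e^{t\xi_0}]$ of $\xi_0$ exists (is finite) on an open interval around zero. For $n\geq 1$ let $\mathcal{T}_n$ be the $n\times n$ random Toeplitz matrix whose $(i,j)$ entry is $\xi_{j-i}$ for $1\le i,j\le n$. Then there exist constants $C_0,C_1>0$ depending only on the distribution of $\xi_0$ such that \[ \mathbb{P}\left(\sigma_{\max}(\mathcal{T}_n)\geq C_0\left((2n)\log(2n)\right)^{1/2}\right)\leq \frac{C_1}{(2n)^2}. \]
   Context: $\sigma_{\max}(A)$ denotes the largest singular value of a matrix $A$, i.e. its operator norm $\max_{\|x\|_2=1}\|Ax\|_2$. *)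

theory Defs
  imports "HOL-Probability.Probability"
begin

definition sigma_max :: "nat \<Rightarrow> (nat \<Rightarrow> nat \<Rightarrow> real) \<Rightarrow> real" where
  "sigma_max n A =
     (SUP x\<in>{x :: nat \<Rightarrow> real. (\<Sum>j<n. (x j)\<^sup>2) = 1}.
        sqrt (\<Sum>i<n. (\<Sum>j<n. A i j * x j)\<^sup>2))"

text \<open>Random Toeplitz matrix: entry (i,j) is xi (j - i) (0-based indices,
  equivalent to the 1-based convention).\<close>
definition toeplitz :: "(int \<Rightarrow> 'a \<Rightarrow> real) \<Rightarrow> 'a \<Rightarrow> nat \<Rightarrow> nat \<Rightarrow> real" where
  "toeplitz \<xi> \<omega> i j = \<xi> (int j - int i) \<omega>"

end

theory Submission imports Defs "HOL-Library.Real_Mod" begin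

lemma orth:
  fixes N p q :: nat
  assumes "0 < N" "p < N" "q < N"
  shows "(\<Sum>k<N. cis (2 * pi * real k * (real p - real q) / real N)) = (if p = q then of_nat N else 0)"
proof (cases "p = q")
  case True then show ?thesis by simp
next
  case False
  define d where "d = real p - real q"
  define r where "r = cis (2 * pi * d / real N)"
  have pw: "r ^ k = cis (2 * pi * real k * d / real N)" for k
    unfolding r_def Complex.DeMoivre by (rule arg_cong[where f=cis]) (simp add: field_simps)
  have "r \<noteq> 1"
  proof
    assume "r = 1"
    then obtain m :: int where m: "2 * pi * d / real N = of_int m * (2 * pi)"
      unfolding r_def cis_eq_1_iff by blast
    then have "d = of_int m * real N" using assms(1) by (simp add: field_simps)
    then have "real_of_int (int p - int q) = real_of_int (m * int N)" by (simp add: d_def)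
    then have e: "int p - int q = m * int N" by (simp only: of_int_eq_iff)
    have "m \<noteq> 0" using e False by auto
    then have "\<bar>m\<bar> \<ge> 1" by linarith
    then have "\<bar>m\<bar> * int N \<ge> 1 * int N" by (intro mult_right_mono) auto
    then have "\<bar>m * int N\<bar> \<ge> int N" by (simp add: abs_mult)
    with e assms show False by linarith
  qed
  have rN: "r ^ N = 1"
  proof -
    have "r ^ N = cis (2 * pi * d)" using pw[of N] assms(1) by (simp add: mult.assoc)
    also have "d = real_of_int (int p - int q)" by (simp add: d_def)
    also have "cis (2 * pi * real_of_int (int p - int q)) = 1"
      by (rule cis_multiple_2pi) simp
    finally show ?thesis .
  qed
  have "(\<Sum>k<N. cis (2 * pi * real k * (real p - real q) / real N)) = (\<Sum>k<N. r ^ k)"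
    by (simp add: pw d_def)
  also have "\<dots> = 0" using \<open>r \<noteq> 1\<close> rN by (simp add: geometric_sum)
  finally show ?thesis using False by simp
qed

lemma parseval:
  fixes N :: nat and c :: "nat \<Rightarrow> real"
  assumes "0 < N"
  shows "(\<Sum>k<N. (cmod (\<Sum>p<N. of_real (c p) * cis (2 * pi * real k * real p / real N)))\<^sup>2)
          = real N * (\<Sum>p<N. (c p)\<^sup>2)"
proof -
  have sq: "(cmod z)\<^sup>2 = Re (z * cnj z)" for z :: complex
    by (simp add: complex_mult_cnj cmod_def)
  have "(\<Sum>k<N. (cmod (\<Sum>p<N. of_real (c p) * cis (2 * pi * real k * real p / real N)))\<^sup>2)
     = (\<Sum>k<N. Re (\<Sum>p<N. \<Sum>q<N. of_real (c p * c q) * cis (2 * pi * real k * (real p - real q) / real N)))"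
    unfolding sq
  proof (rule sum.cong[OF refl])
    fix k assume "k \<in> {..<N}"
    have "(\<Sum>p<N. of_real (c p) * cis (2 * pi * real k * real p / real N)) *
          cnj (\<Sum>p<N. of_real (c p) * cis (2 * pi * real k * real p / real N))
       = (\<Sum>p<N. \<Sum>q<N. (of_real (c p) * cis (2 * pi * real k * real p / real N)) *
            (of_real (c q) * cis (- (2 * pi * real k * real q / real N))))"
      by (simp add: sum_product cis_cnj)
    also have "\<dots> = (\<Sum>p<N. \<Sum>q<N. of_real (c p * c q) * cis (2 * pi * real k * (real p - real q) / real N))"
    proof (intro sum.cong refl)
      fix p q
      have "cis (2 * pi * real k * real p / real N) * cis (- (2 * pi * real k * real q / real N))
          = cis (2 * pi * real k * (real p - real q) / real N)"
        unfolding cis_mult by (rule arg_cong[where f=cis]) (simp add: diff_divide_distrib right_diff_distrib)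
      then show "(of_real (c p) * cis (2 * pi * real k * real p / real N)) *
            (of_real (c q) * cis (- (2 * pi * real k * real q / real N))) =
          of_real (c p * c q) * cis (2 * pi * real k * (real p - real q) / real N)"
        by (simp add: mult_ac)
    qed
    finally show "Re ((\<Sum>p<N. of_real (c p) * cis (2 * pi * real k * real p / real N)) *
          cnj (\<Sum>p<N. of_real (c p) * cis (2 * pi * real k * real p / real N))) =
      Re (\<Sum>p<N. \<Sum>q<N. of_real (c p * c q) * cis (2 * pi * real k * (real p - real q) / real N))"
      by simp
  qed
  also have "\<dots> = Re (\<Sum>k<N. \<Sum>p<N. \<Sum>q<N. of_real (c p * c q) * cis (2 * pi * real k * (real p - real q) / real N))"
    by (rule Re_sum[symmetric])
  also have "(\<Sum>k<N. \<Sum>p<N. \<Sum>q<N. of_real (c p * c q) * cis (2 * pi * real k * (real p - real q) / real N))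
      = (\<Sum>p<N. \<Sum>k<N. \<Sum>q<N. of_real (c p * c q) * cis (2 * pi * real k * (real p - real q) / real N))"
    by (rule sum.swap)
  also have "\<dots> = (\<Sum>p<N. \<Sum>q<N. \<Sum>k<N. of_real (c p * c q) * cis (2 * pi * real k * (real p - real q) / real N))"
    by (intro sum.cong refl sum.swap)
  also have "\<dots> = (\<Sum>p<N. \<Sum>q<N. of_real (c p * c q) * (\<Sum>k<N. cis (2 * pi * real k * (real p - real q) / real N)))"
    by (simp only: sum_distrib_left)
  also have "\<dots> = (\<Sum>p<N. \<Sum>q<N. of_real (c p * c q) * (if p = q then of_nat N else 0))"
    by (intro sum.cong refl) (simp add: orth assms)
  also have "\<dots> = (\<Sum>p<N. of_real (c p * c p) * of_nat N)"
    by (intro sum.cong refl) (simp add: if_distrib cong: if_cong)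
  also have "\<dots> = of_real (real N * (\<Sum>p<N. (c p)\<^sup>2))"
    by (simp add: sum_distrib_left power2_eq_square mult_ac)
  finally show ?thesis by simp
qed


lemma yshift:
  fixes a :: "int \<Rightarrow> real" and x :: "nat \<Rightarrow> real"
  assumes "i < n"
  shows "(\<Sum>m<2*n-1. \<Sum>j<n. if m + j = i + n - 1 then a (int n - 1 - int m) * x j else 0)
         = (\<Sum>j<n. a (int j - int i) * x j)"
proof -
  have "(\<Sum>m<2*n-1. \<Sum>j<n. if m + j = i + n - 1 then a (int n - 1 - int m) * x j else 0)
      = (\<Sum>j<n. \<Sum>m<2*n-1. if m = i + n - 1 - j then a (int n - 1 - int m) * x j else 0)"
    apply (subst sum.swap)
    apply (intro sum.cong refl)
    using assms by auto
  also have "\<dots> = (\<Sum>j<n. a (int n - 1 - int (i + n - 1 - j)) * x j)"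
    apply (intro sum.cong refl)
    apply (subst sum.delta)
    using assms by auto
  also have "\<dots> = (\<Sum>j<n. a (int j - int i) * x j)"
    apply (intro sum.cong refl)
    using assms by (auto simp: of_nat_diff)
  finally show ?thesis .
qed

lemma toep_bound:
  fixes a :: "int \<Rightarrow> real" and n :: nat and B :: real
  assumes n: "n \<ge> 1"
    and hB: "\<And>k. k < 4*n \<Longrightarrow>
       cmod (\<Sum>m<2*n-1. of_real (a (int n - 1 - int m)) * cis (2 * pi * real k * real m / real (4*n))) \<le> B"
  shows "sigma_max n (\<lambda>i j. a (int j - int i)) \<le> B"
proof -
  define N where "N = 4*n"
  have N0: "0 < N" using n by (simp add: N_def)
  define e where "e k p = cis (2 * pi * real k * real p / real N)" for k p :: nat
  have B0: "0 \<le> B" using hB[of 0] n by (auto intro: order_trans[OF norm_ge_zero])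
  have main: "(\<Sum>i<n. (\<Sum>j<n. a (int j - int i) * x j)\<^sup>2) \<le> B\<^sup>2"
    if x1: "(\<Sum>j<n. (x j)\<^sup>2) = 1" for x :: "nat \<Rightarrow> real"
  proof -
    define Q where "Q k = (\<Sum>m<2*n-1. of_real (a (int n - 1 - int m)) * e k m)" for k
    define x' where "x' p = (if p < n then x p else 0)" for p
    define X where "X k = (\<Sum>p<N. of_real (x' p) * e k p)" for k
    define y where "y p = (\<Sum>m<2*n-1. \<Sum>j<n. if m + j = p then a (int n - 1 - int m) * x j else 0)" for p
    have emult: "e k m * e k j = e k (m + j)" for k m j
      unfolding e_def cis_mult by (rule arg_cong[where f=cis]) (simp add: add_divide_distrib algebra_simps)
    have X': "X k = (\<Sum>j<n. of_real (x j) * e k j)" for k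
    proof -
      have "X k = (\<Sum>p<n. of_real (x' p) * e k p)"
        unfolding X_def by (rule sum.mono_neutral_right) (auto simp: N_def x'_def)
      then show ?thesis by (simp add: x'_def)
    qed
    have QX: "Q k * X k = (\<Sum>p<N. of_real (y p) * e k p)" for k
    proof -
      have "Q k * X k = (\<Sum>m<2*n-1. \<Sum>j<n. of_real (a (int n - 1 - int m) * x j) * e k (m + j))"
        unfolding Q_def X' sum_product
        by (intro sum.cong refl) (simp add: emult[symmetric] mult_ac)
      also have "\<dots> = (\<Sum>m<2*n-1. \<Sum>j<n. \<Sum>p<N. if m + j = p then of_real (a (int n - 1 - int m) * x j) * e k p else 0)"
        apply (intro sum.cong refl)
        apply (subst sum.delta')
        by (auto simp: N_def)
      also have "\<dots> = (\<Sum>m<2*n-1. \<Sum>p<N. \<Sum>j<n. if m + j = p then of_real (a (int n - 1 - int m) * x j) * e k p else 0)"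
        by (intro sum.cong refl sum.swap)
      also have "\<dots> = (\<Sum>p<N. \<Sum>m<2*n-1. \<Sum>j<n. if m + j = p then of_real (a (int n - 1 - int m) * x j) * e k p else 0)"
        by (rule sum.swap)
      also have "\<dots> = (\<Sum>p<N. of_real (y p) * e k p)"
        unfolding y_def of_real_sum sum_distrib_right
        by (intro sum.cong refl) (simp add: if_distrib)
      finally show ?thesis .
    qed
    have "real N * (\<Sum>p<N. (y p)\<^sup>2) = (\<Sum>k<N. (cmod (Q k * X k))\<^sup>2)"
      unfolding QX e_def by (rule parseval[symmetric, OF N0])
    also have "\<dots> \<le> (\<Sum>k<N. B\<^sup>2 * (cmod (X k))\<^sup>2)"
    proof (rule sum_mono)
      fix k assume k: "k \<in> {..<N}"
      have "cmod (Q k) \<le> B" using hB[of k] k unfolding Q_def e_def N_def by auto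
      then have "cmod (Q k) * cmod (X k) \<le> B * cmod (X k)" by (intro mult_right_mono) auto
      then have "(cmod (Q k) * cmod (X k))\<^sup>2 \<le> (B * cmod (X k))\<^sup>2"
        by (intro power_mono) auto
      then show "(cmod (Q k * X k))\<^sup>2 \<le> B\<^sup>2 * (cmod (X k))\<^sup>2"
        by (simp add: norm_mult power_mult_distrib)
    qed
    also have "\<dots> = B\<^sup>2 * (real N * (\<Sum>p<N. (x' p)\<^sup>2))"
      unfolding sum_distrib_left[symmetric] X_def e_def by (simp add: parseval[OF N0])
    also have "(\<Sum>p<N. (x' p)\<^sup>2) = (\<Sum>p<n. (x' p)\<^sup>2)"
      by (rule sum.mono_neutral_right) (auto simp: N_def x'_def)
    also have "\<dots> = 1" using x1 by (simp add: x'_def)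
    finally have yb: "(\<Sum>p<N. (y p)\<^sup>2) \<le> B\<^sup>2" using N0 by (simp add: mult.commute)
    have "(\<Sum>i<n. (\<Sum>j<n. a (int j - int i) * x j)\<^sup>2) = (\<Sum>i<n. (y (i + n - 1))\<^sup>2)"
      unfolding y_def by (intro sum.cong refl) (simp only: yshift lessThan_iff)
    also have "\<dots> = (\<Sum>p\<in>(\<lambda>i. i + n - 1) ` {..<n}. (y p)\<^sup>2)"
      using n by (subst sum.reindex) (auto simp: inj_on_def)
    also have "\<dots> \<le> (\<Sum>p<N. (y p)\<^sup>2)"
      by (rule sum_mono2) (auto simp: N_def)
    finally show ?thesis using yb by linarith
  qed
  have ne: "{x :: nat \<Rightarrow> real. (\<Sum>j<n. (x j)\<^sup>2) = 1} \<noteq> {}"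
  proof -
    have "(\<Sum>j<n. ((\<lambda>j::nat. if j = 0 then 1 else 0::real) j)\<^sup>2) = 1"
    proof -
      have "(\<Sum>j<n. ((\<lambda>j::nat. if j = 0 then 1 else 0::real) j)\<^sup>2) = (\<Sum>j<n. if j = 0 then 1 else 0)"
        by (intro sum.cong refl) auto
      also have "\<dots> = 1" using n by (subst sum.delta) auto
      finally show ?thesis .
    qed
    then have "(\<lambda>j::nat. if j = 0 then 1 else 0::real) \<in> {x :: nat \<Rightarrow> real. (\<Sum>j<n. (x j)\<^sup>2) = 1}"
      by simp
    then show ?thesis by (metis empty_iff)
  qed
  show ?thesis
    unfolding sigma_max_def
  proof (rule cSUP_least[OF ne])
    fix x assume "x \<in> {x :: nat \<Rightarrow> real. (\<Sum>j<n. (x j)\<^sup>2) = 1}"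
    then have "(\<Sum>i<n. (\<Sum>j<n. a (int j - int i) * x j)\<^sup>2) \<le> B\<^sup>2" by (intro main) simp
    then show "sqrt (\<Sum>i<n. (\<Sum>j<n. a (int j - int i) * x j)\<^sup>2) \<le> B"
      using B0 real_sqrt_le_mono[OF \<open>_ \<le> B\<^sup>2\<close>] by simp
  qed
qed


lemma taylor2_bound: "exp y \<le> 1 + y + y\<^sup>2 / 2 * exp \<bar>y\<bar>" for y :: real
proof -
  obtain t where t: "\<bar>t\<bar> \<le> \<bar>y\<bar>" "exp y = (\<Sum>m<2. y ^ m / fact m) + exp t / fact 2 * y ^ 2"
    using Maclaurin_exp_le[of y 2] by blast
  have "exp t \<le> exp \<bar>y\<bar>" using t(1) by simp
  then have "exp t / 2 * y\<^sup>2 \<le> exp \<bar>y\<bar> / 2 * y\<^sup>2" by (intro mult_right_mono) auto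
  then show ?thesis using t(2) by (simp add: numeral_2_eq_2 mult_ac)
qed

lemma sq_exp_bound: "x\<^sup>2 \<le> 2 / e\<^sup>2 * exp (e * \<bar>x\<bar>)" if "e > 0" for x e :: real
proof -
  have "1 + e * \<bar>x\<bar> + (e * \<bar>x\<bar>)\<^sup>2 / 2 \<le> exp (e * \<bar>x\<bar>)"
    using that by (intro exp_lower_Taylor_quadratic) auto
  then have "(e * \<bar>x\<bar>)\<^sup>2 / 2 \<le> exp (e * \<bar>x\<bar>)" using that by (smt (verit) mult_nonneg_nonneg abs_ge_zero)
  then have "e\<^sup>2 * x\<^sup>2 \<le> 2 * exp (e * \<bar>x\<bar>)" by (simp add: power_mult_distrib)
  then show ?thesis using that by (simp add: field_simps)
qed

lemma mgf_bound:
  fixes D :: "real measure"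
  assumes "prob_space D"
    and sD: "sets D = sets borel"
    and int1: "integrable D (\<lambda>x. x)"
    and mean: "(\<integral>x. x \<partial>D) = 0"
    and "\<exists>\<delta>>0. \<forall>t. \<bar>t\<bar> < \<delta> \<longrightarrow> integrable D (\<lambda>x. exp (t * x))"
  shows "\<exists>K>0. \<exists>d>0. \<forall>u. \<bar>u\<bar> \<le> d \<longrightarrow> integrable D (\<lambda>x. exp (u * x)) \<and> (\<integral>x. exp (u * x) \<partial>D) \<le> exp (K * u\<^sup>2)"
proof -
  interpret D: prob_space D by fact
  obtain \<delta> where d: "\<delta> > 0" "\<And>t. \<bar>t\<bar> < \<delta> \<Longrightarrow> integrable D (\<lambda>x. exp (t * x))"
    using assms(5) by blast
  define e where "e = \<delta> / 4"
  have e0: "e > 0" using d by (simp add: e_def)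
  define G where "G x = 1 / e\<^sup>2 * (exp (2 * e * x) + exp (- (2 * e) * x))" for x
  have intG: "integrable D G"
  proof -
    have "integrable D (\<lambda>x. exp (2 * e * x))" using d by (intro d(2)) (simp add: e_def)
    moreover have "integrable D (\<lambda>x. exp (- (2 * e) * x))" using d by (intro d(2)) (simp add: e_def)
    ultimately show ?thesis unfolding G_def by (intro integrable_mult_right Bochner_Integration.integrable_add)
  qed
  define M where "M = (\<integral>x. G x \<partial>D)"
  define K where "K = M + 1"
  have G0: "G x \<ge> 0" for x unfolding G_def by (simp add: e0)
  have M0: "M \<ge> 0" unfolding M_def by (intro integral_nonneg_AE) (simp add: G0)
  have K0: "K > 0" using M0 by (simp add: K_def)
  have pt: "exp (u * x) \<le> 1 + u * x + u\<^sup>2 * G x" if u: "\<bar>u\<bar> \<le> e" for u x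
  proof -
    have "exp (u * x) \<le> 1 + u * x + (u * x)\<^sup>2 / 2 * exp \<bar>u * x\<bar>" by (rule taylor2_bound)
    also have "(u * x)\<^sup>2 / 2 * exp \<bar>u * x\<bar> \<le> u\<^sup>2 * G x"
    proof -
      have ax: "exp \<bar>u * x\<bar> \<le> exp (e * \<bar>x\<bar>)" using u by (simp add: abs_mult mult_right_mono)
      have "x\<^sup>2 \<le> 2 / e\<^sup>2 * exp (e * \<bar>x\<bar>)" by (rule sq_exp_bound[OF e0])
      then have "x\<^sup>2 * exp \<bar>u * x\<bar> \<le> 2 / e\<^sup>2 * exp (e * \<bar>x\<bar>) * exp (e * \<bar>x\<bar>)"
        using ax by (intro mult_mono) auto
      also have "\<dots> = 2 / e\<^sup>2 * exp (2 * e * \<bar>x\<bar>)" by (simp add: exp_add[symmetric] mult_ac)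
      also have "exp (2 * e * \<bar>x\<bar>) \<le> exp (2 * e * x) + exp (- (2 * e) * x)"
        by (cases "x \<ge> 0") auto
      finally have "x\<^sup>2 * exp \<bar>u * x\<bar> \<le> 2 * G x"
        unfolding G_def using e0 by (simp add: divide_right_mono field_simps)
      then have "u\<^sup>2 * (x\<^sup>2 * exp \<bar>u * x\<bar>) \<le> u\<^sup>2 * (2 * G x)" by (intro mult_left_mono) auto
      then show ?thesis by (simp add: power_mult_distrib)
    qed
    finally show ?thesis by simp
  qed
  have "\<forall>u. \<bar>u\<bar> \<le> e \<longrightarrow> integrable D (\<lambda>x. exp (u * x)) \<and> (\<integral>x. exp (u * x) \<partial>D) \<le> exp (K * u\<^sup>2)"
  proof (intro allI impI)
    fix u :: real assume u: "\<bar>u\<bar> \<le> e"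
    have iu: "integrable D (\<lambda>x. exp (u * x))" using u d by (intro d(2)) (simp add: e_def)
    have "(\<integral>x. exp (u * x) \<partial>D) \<le> (\<integral>x. 1 + u * x + u\<^sup>2 * G x \<partial>D)"
      by (intro integral_mono iu pt u Bochner_Integration.integrable_add integrable_mult_right
          intG int1 D.integrable_const)
    also have "\<dots> = 1 + u * 0 + u\<^sup>2 * M"
      unfolding M_def mean[symmetric]
      by (subst Bochner_Integration.integral_add, (intro Bochner_Integration.integrable_add integrable_mult_right
          intG int1 D.integrable_const)+)
         (subst Bochner_Integration.integral_add, (intro integrable_mult_right intG int1 D.integrable_const)+, simp add: D.prob_space)
    also have "\<dots> \<le> 1 + K * u\<^sup>2" by (simp add: K_def algebra_simps)
    also have "\<dots> \<le> exp (K * u\<^sup>2)" by (rule exp_ge_add_one_self)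
    finally show "integrable D (\<lambda>x. exp (u * x)) \<and> (\<integral>x. exp (u * x) \<partial>D) \<le> exp (K * u\<^sup>2)"
      using iu by simp
  qed
  then show ?thesis using K0 e0 by blast
qed


lemma chernoff:
  fixes M :: "'a measure" and \<xi> :: "int \<Rightarrow> 'a \<Rightarrow> real" and D :: "real measure"
  assumes P: "prob_space M" and ind: "prob_space.indep_vars M (\<lambda>_. borel) \<xi> UNIV"
    and dist: "\<And>j. distr M borel (\<xi> j) = D"
    and mgf: "\<And>u. \<bar>u\<bar> \<le> d \<Longrightarrow> integrable D (\<lambda>x. exp (u * x)) \<and> (\<integral>x. exp (u * x) \<partial>D) \<le> exp (K * u\<^sup>2)"
    and F: "finite F" and c: "\<And>j. j \<in> F \<Longrightarrow> \<bar>c j\<bar> \<le> 1"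
    and s: "0 < s" "s \<le> d" and K: "K \<ge> 0"
  shows "measure M {\<omega> \<in> space M. (\<Sum>j\<in>F. c j * \<xi> j \<omega>) \<ge> t} \<le> exp (- s * t + K * s\<^sup>2 * real (card F))"
proof -
  interpret prob_space M by fact
  have meas[measurable]: "\<xi> j \<in> borel_measurable M" for j
    using ind unfolding indep_vars_def by auto
  define X where "X j \<omega> = exp (s * c j * \<xi> j \<omega>)" for j \<omega>
  have indX: "indep_vars (\<lambda>_. borel) X F"
    unfolding X_def
    by (rule indep_vars_compose2[where Y="\<lambda>j x. exp (s * c j * x)", OF indep_vars_subset[OF ind]]) auto
  have bnd: "\<bar>s * c j\<bar> \<le> d" if "j \<in> F" for j
  proof -
    have "\<bar>s * c j\<bar> = s * \<bar>c j\<bar>" using s by (simp add: abs_mult)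
    also have "\<dots> \<le> s * 1" using c[OF that] s by (intro mult_left_mono) auto
    finally show ?thesis using s by simp
  qed
  have intX: "integrable M (X j)" and EX: "(\<integral>\<omega>. X j \<omega> \<partial>M) \<le> exp (K * s\<^sup>2)" if j: "j \<in> F" for j
  proof -
    have m: "(\<lambda>x. exp (s * c j * x)) \<in> borel_measurable borel" by measurable
    have "integrable D (\<lambda>x. exp (s * c j * x))" using mgf[OF bnd[OF j]] by simp
    then show "integrable M (X j)"
      unfolding X_def dist[of j, symmetric] by (subst (asm) integrable_distr_eq[OF meas m])
    have "(\<integral>\<omega>. X j \<omega> \<partial>M) = (\<integral>x. exp (s * c j * x) \<partial>D)"
      unfolding X_def dist[of j, symmetric] by (rule integral_distr[OF meas m, symmetric])
    also have "\<dots> \<le> exp (K * (s * c j)\<^sup>2)" using mgf[OF bnd[OF j]] by simp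
    also have "\<dots> \<le> exp (K * s\<^sup>2)"
    proof -
      have "(s * c j)\<^sup>2 \<le> s\<^sup>2"
      proof -
        have "\<bar>s * c j\<bar> \<le> \<bar>s\<bar>" using c[OF j] s by (simp add: abs_mult mult_left_le)
        then show ?thesis by (metis abs_le_square_iff)
      qed
      then show ?thesis using K by (simp add: mult_left_mono)
    qed
    finally show "(\<integral>\<omega>. X j \<omega> \<partial>M) \<le> exp (K * s\<^sup>2)" .
  qed
  define u where "u \<omega> = (\<Prod>j\<in>F. X j \<omega>)" for \<omega>
  have uexp: "u \<omega> = exp (s * (\<Sum>j\<in>F. c j * \<xi> j \<omega>))" for \<omega>
    unfolding u_def X_def by (simp add: exp_sum F sum_distrib_left mult_ac)
  have intu: "integrable M u" unfolding u_def using F indX intX by (rule indep_vars_integrable)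
  have Eu: "(\<integral>\<omega>. u \<omega> \<partial>M) = (\<Prod>j\<in>F. \<integral>\<omega>. X j \<omega> \<partial>M)"
    unfolding u_def using F indX intX by (rule indep_vars_lebesgue_integral)
  also have "\<dots> \<le> (\<Prod>j\<in>F. exp (K * s\<^sup>2))"
    using EX by (intro prod_mono conjI integral_nonneg_AE) (auto simp: X_def)
  also have "\<dots> = exp (K * s\<^sup>2 * real (card F))"
    by (simp add: exp_of_nat_mult[symmetric] mult_ac)
  finally have Eub: "(\<integral>\<omega>. u \<omega> \<partial>M) \<le> exp (K * s\<^sup>2 * real (card F))" .
  have "{\<omega> \<in> space M. (\<Sum>j\<in>F. c j * \<xi> j \<omega>) \<ge> t} = {\<omega> \<in> space M. u \<omega> \<ge> exp (s * t)}"
    using s by (auto simp: uexp)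
  also have "measure M \<dots> \<le> (\<integral>\<omega>. u \<omega> \<partial>M) / exp (s * t)"
    by (rule integral_Markov_inequality_measure[OF intu, where A="space M"]) (auto simp: uexp)
  also have "\<dots> \<le> exp (K * s\<^sup>2 * real (card F)) / exp (s * t)"
    using Eub by (intro divide_right_mono) auto
  also have "\<dots> = exp (- s * t + K * s\<^sup>2 * real (card F))"
    by (simp add: exp_diff[symmetric] exp_add)
  finally show ?thesis .
qed


lemma qint:
  fixes a :: "int \<Rightarrow> real" and n k N :: nat
  assumes "n \<ge> 1"
  shows "(\<Sum>m<2*n-1. of_real (a (int n - 1 - int m)) * cis (2 * pi * real k * real m / real N))
       = (\<Sum>j\<in>{1 - int n..int n - 1}. of_real (a j) * cis (2 * pi * real k * real_of_int (int n - 1 - j) / real N))"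
proof (rule sum.reindex_bij_witness[where i="\<lambda>j. nat (int n - 1 - j)" and j="\<lambda>m. int n - 1 - int m"])
  fix m assume "m \<in> {..<2*n-1}"
  then show "nat (int n - 1 - (int n - 1 - int m)) = m" by simp
next
  fix m assume "m \<in> {..<2*n-1}"
  then show "int n - 1 - int m \<in> {1 - int n..int n - 1}" using assms by simp
next
  fix j assume "j \<in> {1 - int n..int n - 1}"
  then show "int n - 1 - int (nat (int n - 1 - j)) = j" by simp
next
  fix j assume "j \<in> {1 - int n..int n - 1}"
  then show "nat (int n - 1 - j) \<in> {..<2*n-1}" using assms by (simp add: nat_less_iff of_nat_diff)
next
  fix m assume "m \<in> {..<2*n-1}"
  have "real_of_int (int n - 1 - (int n - 1 - int m)) = real m" by simp
  then show "of_real (a (int n - 1 - int m)) * cis (2 * pi * real k * real_of_int (int n - 1 - (int n - 1 - int m)) / real N)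
     = of_real (a (int n - 1 - int m)) * cis (2 * pi * real k * real m / real N)" by (simp only:)
qed

lemma toeplitz_eq: "toeplitz \<xi> \<omega> = (\<lambda>i j. (\<lambda>z. \<xi> z \<omega>) (int j - int i))"
  by (simp add: toeplitz_def fun_eq_iff)

lemma ln_small:
  fixes d y :: real
  assumes d: "d > 0" and y4: "y \<ge> 4 / d ^ 4" and y1: "y > 1"
  shows "sqrt (ln y / y) \<le> d"
proof -
  have y0: "y > 0" using y1 by simp
  have sq: "sqrt y > 0" using y0 by simp
  have "ln y = 2 * ln (sqrt y)" using y0 by (simp add: ln_sqrt)
  also have "\<dots> \<le> 2 * (sqrt y - 1)" using ln_le_minus_one[OF sq] by simp
  also have "\<dots> \<le> 2 * sqrt y" by simp
  finally have l: "ln y \<le> 2 * sqrt y" .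
  have e: "(2 / d\<^sup>2)\<^sup>2 = 4 / d ^ 4" by (simp add: power_divide power_mult[symmetric])
  have "(2 / d\<^sup>2)\<^sup>2 \<le> y" unfolding e by (rule y4)
  then have "2 / d\<^sup>2 \<le> sqrt y" by (rule real_le_rsqrt)
  then have h2: "2 \<le> d\<^sup>2 * sqrt y" using d by (simp add: divide_le_eq mult.commute)
  have "ln y / y \<le> 2 * sqrt y / y" using l y0 by (rule divide_right_mono[OF _ less_imp_le])
  also have "2 * sqrt y / y = 2 / sqrt y"
  proof -
    have "y = sqrt y * sqrt y" using y0 by simp
    then show ?thesis using sq by (metis nonzero_mult_div_cancel_right less_irrefl times_divide_eq_right divide_divide_eq_left)
  qed
  also have "\<dots> \<le> d\<^sup>2" using h2 sq by (simp add: divide_le_eq mult.commute)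
  finally have "ln y / y \<le> d\<^sup>2" .
  then have "sqrt (ln y / y) \<le> sqrt (d\<^sup>2)" by (rule real_sqrt_le_mono)
  then show ?thesis using d by simp
qed

theorem mainTheorem1:
  fixes D :: "real measure"
  assumes "prob_space D"
    and "sets D = sets borel"
    and "integrable D (\<lambda>x. x)"
    and "(\<integral>x. x \<partial>D) = 0"
    and "integrable D (\<lambda>x. x\<^sup>2)"
    and "(\<integral>x. x\<^sup>2 \<partial>D) > 0"
    and "\<exists>\<delta>>0. \<forall>t. \<bar>t\<bar> < \<delta> \<longrightarrow> integrable D (\<lambda>x. exp (t * x))"
  shows "\<exists>C0>0. \<exists>C1>0. \<forall>(M :: 'a measure) (\<xi> :: int \<Rightarrow> 'a \<Rightarrow> real).
           prob_space M \<and> prob_space.indep_vars M (\<lambda>_. borel) \<xi> UNIV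
             \<and> (\<forall>j. distr M borel (\<xi> j) = D) \<longrightarrow>
           (\<forall>n::nat. n \<ge> 1 \<longrightarrow>
              measure M {\<omega> \<in> space M.
                 sigma_max n (toeplitz \<xi> \<omega>) \<ge> C0 * sqrt (real (2*n) * ln (real (2*n)))}
              \<le> C1 / (real (2*n))\<^sup>2)"
proof -
  obtain K d where K0: "K > 0" and d0: "d > 0"
    and mgf: "\<And>u. \<bar>u\<bar> \<le> d \<Longrightarrow> integrable D (\<lambda>x. exp (u * x)) \<and> (\<integral>x. exp (u * x) \<partial>D) \<le> exp (K * u\<^sup>2)"
    using mgf_bound[OF assms(1-4) assms(7)] by blast
  define C0 where "C0 = 2 * K + 8"
  define n0 :: nat where "n0 = nat \<lceil>4 / d ^ 4\<rceil> + 1"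
  define C1 where "C1 = 8 + 4 * (real n0)\<^sup>2"
  have C0pos: "C0 > 0" using K0 by (simp add: C0_def)
  have C1pos: "C1 > 0" by (simp add: C1_def add_pos_nonneg)
  have main: "measure M {\<omega> \<in> space M.
                 sigma_max n (toeplitz \<xi> \<omega>) \<ge> C0 * sqrt (real (2*n) * ln (real (2*n)))}
              \<le> C1 / (real (2*n))\<^sup>2"
    if P: "prob_space M" and ind: "prob_space.indep_vars M (\<lambda>_. borel) \<xi> UNIV"
      and dist: "\<And>j. distr M borel (\<xi> j) = D" and n: "n \<ge> 1"
    for M :: "'a measure" and \<xi> :: "int \<Rightarrow> 'a \<Rightarrow> real" and n :: nat
  proof -
    interpret prob_space M by fact
    define m0 where "m0 = real (2*n)"
    have m0_2: "m0 \<ge> 2" using n by (simp add: m0_def)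
    define E where "E = {\<omega> \<in> space M. sigma_max n (toeplitz \<xi> \<omega>) \<ge> C0 * sqrt (m0 * ln m0)}"
    show ?thesis
    proof (cases "n < n0")
      case True
      have "measure M E \<le> 1" by simp
      also have "1 \<le> C1 / m0\<^sup>2"
      proof -
        have "m0 \<le> 2 * real n0" using True by (simp add: m0_def)
        then have "m0\<^sup>2 \<le> (2 * real n0)\<^sup>2" using m0_2 by (intro power_mono) auto
        also have "\<dots> \<le> C1" by (simp add: C1_def power_mult_distrib)
        finally show ?thesis using m0_2 by (simp add: field_simps)
      qed
      finally show ?thesis by (simp add: E_def m0_def)
    next
      case False
      define L where "L = ln m0"
      have L0: "L > 0" using m0_2 by (simp add: L_def)
      define s where "s = sqrt (L / m0)"
      define t where "t = C0 * sqrt (m0 * L) / 2"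
      have s0: "s > 0" using L0 m0_2 by (simp add: s_def)
      have sd: "s \<le> d"
      proof -
        have "4 / d ^ 4 \<le> real n0" unfolding n0_def by linarith
        also have "\<dots> \<le> m0" using False by (simp add: m0_def)
        finally show ?thesis unfolding s_def L_def using m0_2 d0 by (intro ln_small) auto
      qed
      have st: "s * t = C0 * L / 2"
      proof -
        have "s * sqrt (m0 * L) = sqrt (L / m0 * (m0 * L))" by (simp only: s_def real_sqrt_mult)
        also have "L / m0 * (m0 * L) = L\<^sup>2" using m0_2 by (simp add: field_simps power2_eq_square)
        also have "sqrt (L\<^sup>2) = L" using L0 by simp
        finally show ?thesis by (simp add: t_def)
      qed
      have s2: "s\<^sup>2 = L / m0" using L0 m0_2 by (simp add: s_def)
      define F where "F = {1 - int n..int n - 1}"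
      have cardF: "real (card F) \<le> m0" by (simp add: F_def m0_def)
      define \<theta> where "\<theta> k j = 2 * pi * real k * real_of_int (int n - 1 - j) / real (4*n)" for k :: nat and j :: int
      define cf where "cf k b j = (if b = (0::nat) then cos (\<theta> k j) else if b = 1 then - cos (\<theta> k j)
                                   else if b = 2 then sin (\<theta> k j) else - sin (\<theta> k j))" for k b j
      define Ev where "Ev kb = {\<omega> \<in> space M. (\<Sum>j\<in>F. cf (fst kb) (snd kb) j * \<xi> j \<omega>) \<ge> t}" for kb
      define I where "I = {..<4*n} \<times> {..<(4::nat)}"
      have cf1: "\<bar>cf k b j\<bar> \<le> 1" for k b j by (simp add: cf_def)
      have meas[measurable]: "\<xi> j \<in> borel_measurable M" for j
        using ind unfolding indep_vars_def by auto
      have EvM: "Ev kb \<in> sets M" for kb unfolding Ev_def by measurable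
      have Evb: "measure M (Ev kb) \<le> 1 / m0 ^ 4" for kb
      proof -
        have "measure M (Ev kb) \<le> exp (- s * t + K * s\<^sup>2 * real (card F))"
          unfolding Ev_def
          by (rule chernoff[OF P ind dist _ _ _ s0 sd]) (use mgf K0 cf1 in \<open>auto simp: F_def\<close>)
        also have "- s * t + K * s\<^sup>2 * real (card F) \<le> - 4 * L"
        proof -
          have "K * s\<^sup>2 * real (card F) \<le> K * s\<^sup>2 * m0" using cardF K0 by (intro mult_left_mono) auto
          also have "\<dots> = K * L" using s2 m0_2 by simp
          finally show ?thesis using st by (simp add: C0_def algebra_simps)
        qed
        then have "exp (- s * t + K * s\<^sup>2 * real (card F)) \<le> exp (- 4 * L)" by simp
        also have "exp (- 4 * L) = 1 / m0 ^ 4"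
        proof -
          have "exp (real 4 * L) = m0 ^ 4" unfolding exp_of_nat_mult L_def using m0_2 by simp
          then show ?thesis by (simp add: exp_minus field_simps)
        qed
        finally show ?thesis by simp
      qed
      have sub: "E \<subseteq> (\<Union>kb\<in>I. Ev kb)"
      proof
        fix \<omega> assume \<omega>E: "\<omega> \<in> E"
        then have \<omega>: "\<omega> \<in> space M" by (simp add: E_def)
        show "\<omega> \<in> (\<Union>kb\<in>I. Ev kb)"
        proof (rule ccontr)
          assume nin: "\<omega> \<notin> (\<Union>kb\<in>I. Ev kb)"
          define Q where "Q k = (\<Sum>m<2*n-1. of_real (\<xi> (int n - 1 - int m) \<omega>) * cis (2 * pi * real k * real m / real (4*n)))" for k
          have Qlt: "cmod (Q k) < 2 * t" if k: "k < 4*n" for k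
          proof -
            have Qe: "Q k = (\<Sum>j\<in>F. of_real (\<xi> j \<omega>) * cis (\<theta> k j))"
              unfolding Q_def F_def \<theta>_def by (rule qint[OF n])
            have lt: "(\<Sum>j\<in>F. cf k b j * \<xi> j \<omega>) < t" if "b < 4" for b
              using nin \<omega> k that by (auto simp: Ev_def I_def not_le)
            have ReQ: "Re (Q k) = (\<Sum>j\<in>F. cf k 0 j * \<xi> j \<omega>)" unfolding Qe by (simp add: Re_sum cf_def mult.commute)
            have ImQ: "Im (Q k) = (\<Sum>j\<in>F. cf k 2 j * \<xi> j \<omega>)" unfolding Qe by (simp add: Im_sum cf_def mult.commute)
            have ReQ': "- Re (Q k) = (\<Sum>j\<in>F. cf k 1 j * \<xi> j \<omega>)" unfolding ReQ by (simp add: cf_def sum_negf[symmetric])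
            have ImQ': "- Im (Q k) = (\<Sum>j\<in>F. cf k 3 j * \<xi> j \<omega>)" unfolding ImQ by (simp add: cf_def sum_negf[symmetric])
            have "\<bar>Re (Q k)\<bar> < t" using lt[of 0] lt[of 1] ReQ ReQ' by linarith
            moreover have "\<bar>Im (Q k)\<bar> < t" using lt[of 2] lt[of 3] ImQ ImQ' by linarith
            ultimately show ?thesis using cmod_le[of "Q k"] by linarith
          qed
          define B where "B = Max ((\<lambda>k. cmod (Q k)) ` {..<4*n})"
          have Bge: "cmod (Q k) \<le> B" if "k < 4*n" for k unfolding B_def using that by (intro Max_ge) auto
          have Blt: "B < 2 * t" unfolding B_def using n Qlt by (subst Max_less_iff) (auto simp: lessThan_empty_iff)
          have "sigma_max n (toeplitz \<xi> \<omega>) \<le> B"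
            unfolding toeplitz_eq by (rule toep_bound[OF n]) (use Bge in \<open>simp add: Q_def\<close>)
          moreover have "sigma_max n (toeplitz \<xi> \<omega>) \<ge> 2 * t" using \<omega>E by (simp add: E_def t_def L_def)
          ultimately show False using Blt by linarith
        qed
      qed
      have "measure M E \<le> measure M (\<Union>kb\<in>I. Ev kb)"
      proof (cases "E \<in> sets M")
        case True then show ?thesis using sub EvM by (intro finite_measure_mono) (auto simp: I_def)
      next
        case False then show ?thesis by (simp add: measure_notin_sets)
      qed
      also have "\<dots> \<le> (\<Sum>kb\<in>I. measure M (Ev kb))"
        by (rule measure_UNION_le) (auto simp: I_def EvM)
      also have "\<dots> \<le> (\<Sum>kb\<in>I. 1 / m0 ^ 4)" by (rule sum_mono) (rule Evb)
      also have "\<dots> = 8 * m0 / m0 ^ 4" by (simp add: I_def m0_def)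
      also have "\<dots> \<le> C1 / m0\<^sup>2"
      proof -
        have "8 * m0 / m0 ^ 4 = 8 / (m0 * m0\<^sup>2)" using m0_2 by (simp add: field_simps power2_eq_square power4_eq_xxxx)
        also have "\<dots> \<le> 8 / m0\<^sup>2" using m0_2 by (simp add: field_simps)
        also have "\<dots> \<le> C1 / m0\<^sup>2" by (intro divide_right_mono) (auto simp: C1_def)
        finally show ?thesis .
      qed
      finally show ?thesis by (simp add: E_def m0_def)
    qed
  qed
  show ?thesis using C0pos C1pos main by blast
qed

end
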